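(* Let $w$ be a 2D-weight and $\mathfrak{K}_w$ the 2D-GWN operator associated with $w$. Then for every $\Phi\in\mathcal{S}^*(M)$, $$\mathfrak{K}_w\Phi=\sum_{j,k=0}^\infty w(j,k)\,\mathfrak{a}_k^\dagger\mathfrak{a}_j\mathfrak{a}_j^\dagger\mathfrak{a}_k\Phi,$$ where the double series converges naturally, i.e. the square partial sums $\sum_{j,k=0}^n w(j,k)\mathfrak{a}_k^\dagger\mathfrak{a}_j\mathfrak{a}_j^\dagger\mathfrak{a}_k\Phi$ converge to $\mathfrak{K}_w\Phi$ in the strong topology of $\mathcal{S}^*(M)$ as $n\to\infty$.
   Context: Setting: $M$ a discrete-time normal martingale with the chaotic representation property; $Z_0=M_0$, $Z_n=M_n-M_{n-1}$; $\Gamma$ the finite subsets of $\mathbb{N}$, $Z_\emptyset=1$, $Z_\sigma=\prod_{j\in\sigma}Z_j$, an orthonormal basis of $\mathcal{L}^2(M)=L^2(\Omega,\sigma(M_n;n\ge0),P)$. $\lambda_\emptyset=1$, $\lambda_\sigma=\prod_{k\in\sigma}(k+1)$; $\mathcal{S}(M)=\{\xi\in\mathcal{L}^2(M):\sum_\sigma\lambda_\sigma^{2p}|\langle Z_\sigma,\xi\rangle|^2<\infty\ \forall p\ge0\}$ with the topology of these Hilbertian norms (countably Hilbertian nuclear), $\mathcal{S}^*(M)$ its dual with the strong topology. Fock transform $\widehat\Phi(\sigma)=\Phi(Z_\sigma)$ (determines $\Phi$). $\mathbf{1}_\sigma$ is the indicator of $\sigma$. A 2D-weight is a nonnegative $w$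 on $\mathbb{N}^2$ with $\sup_k\sum_jw(j,k)<\infty$; its spectral function is $\vartheta_w(\sigma)=\sum_j\mathbf{1}_\sigma(j)w(j,j)+\sum_{j,k}(1-\mathbf{1}_\sigma(j))\mathbf{1}_\sigma(k)w(j,k)$; the 2D-GWN operator $\mathfrak{K}_w$ is the unique continuous linear operator on $\mathcal{S}^*(M)$ with $\widehat{\mathfrak{K}_w\Phi}(\sigma)=\vartheta_w(\sigma)\widehat\Phi(\sigma)$. For $k\ge0$, $\mathfrak{a}_k,\mathfrak{a}_k^\dagger$ are the continuous linear operators on $\mathcal{S}^*(M)$ determined by $\widehat{\mathfrak{a}_k\Phi}(\sigma)=(1-\mathbf{1}_\sigma(k))\widehat\Phi(\sigma\cup\{k\})$ and $\widehat{\mathfrak{a}_k^\dagger\Phi}(\sigma)=\mathbf{1}_\sigma(k)\widehat\Phi(\sigma\setminus\{k\})$. *)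

theory Defs
  imports "HOL-Analysis.Analysis"
begin

text \<open>
A test function xi in S(M) is represented by its coefficient family
x sigma = <Z_sigma, xi> (zero outside Gamma); a generalized functional Phi in
S*(M) is a continuous linear functional on this coefficient space.
\<close>

definition Gam :: "nat set set" where
  "Gam = {\<sigma>. finite \<sigma>}"

definition lam :: "nat set \<Rightarrow> real" where
  "lam \<sigma> = real (\<Prod>k\<in>\<sigma>. k + 1)"

definition ind :: "nat set \<Rightarrow> nat \<Rightarrow> real" where
  "ind \<sigma> j = (if j \<in> \<sigma> then 1 else 0)"

definition pnorm :: "real \<Rightarrow> (nat set \<Rightarrow> complex) \<Rightarrow> real" where
  "pnorm p x = sqrt (\<Sum>\<^sub>\<infinity>\<sigma>\<in>Gam. lam \<sigma> powr (2 * p) * (cmod (x \<sigma>))\<^sup>2)"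

definition Sspace :: "(nat set \<Rightarrow> complex) set" where
  "Sspace = {x. (\<forall>\<sigma>. \<sigma> \<notin> Gam \<longrightarrow> x \<sigma> = 0) \<and>
     (\<forall>p\<ge>0. (\<lambda>\<sigma>. lam \<sigma> powr (2 * p) * (cmod (x \<sigma>))\<^sup>2) summable_on Gam)}"

definition S_bounded :: "(nat set \<Rightarrow> complex) set \<Rightarrow> bool" where
  "S_bounded B \<longleftrightarrow> B \<subseteq> Sspace \<and> (\<forall>p\<ge>0. \<exists>C. \<forall>x\<in>B. pnorm p x \<le> C)"

definition Sdual :: "((nat set \<Rightarrow> complex) \<Rightarrow> complex) set" where
  "Sdual = {\<Phi>. (\<forall>x y. x \<in> Sspace \<longrightarrow> y \<in> Sspace \<longrightarrow> \<Phi> (\<lambda>\<sigma>. x \<sigma> + y \<sigma>) = \<Phi> x + \<Phi> y)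
     \<and> (\<forall>c x. x \<in> Sspace \<longrightarrow> \<Phi> (\<lambda>\<sigma>. c * x \<sigma>) = c * \<Phi> x)
     \<and> (\<exists>p\<ge>0. \<exists>C. \<forall>x\<in>Sspace. cmod (\<Phi> x) \<le> C * pnorm p x)
     \<and> (\<forall>x. x \<notin> Sspace \<longrightarrow> \<Phi> x = 0)}"

definition Zb :: "nat set \<Rightarrow> (nat set \<Rightarrow> complex)" where
  "Zb \<sigma> = (\<lambda>\<tau>. if \<tau> = \<sigma> then 1 else 0)"

definition fock :: "((nat set \<Rightarrow> complex) \<Rightarrow> complex) \<Rightarrow> nat set \<Rightarrow> complex" where
  "fock \<Phi> \<sigma> = \<Phi> (Zb \<sigma>)"

definition strong_conv ::
  "(nat \<Rightarrow> ((nat set \<Rightarrow> complex) \<Rightarrow> complex)) \<Rightarrow> ((nat set \<Rightarrow> complex) \<Rightarrow> complex) \<Rightarrow> bool" where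
  "strong_conv F \<Psi> \<longleftrightarrow> (\<forall>B. S_bounded B \<longrightarrow>
     (\<forall>\<epsilon>>0. eventually (\<lambda>n. \<forall>x\<in>B. cmod (F n x - \<Psi> x) < \<epsilon>) sequentially))"

definition is_2D_weight :: "(nat \<Rightarrow> nat \<Rightarrow> real) \<Rightarrow> bool" where
  "is_2D_weight w \<longleftrightarrow> (\<forall>j k. 0 \<le> w j k) \<and> (\<forall>k. summable (\<lambda>j. w j k))
     \<and> bdd_above (range (\<lambda>k. \<Sum>j. w j k))"

definition spectral :: "(nat \<Rightarrow> nat \<Rightarrow> real) \<Rightarrow> nat set \<Rightarrow> real" where
  "spectral w \<sigma> = (\<Sum>\<^sub>\<infinity>j. ind \<sigma> j * w j j)
      + (\<Sum>\<^sub>\<infinity>(j,k). (1 - ind \<sigma> j) * ind \<sigma> k * w j k)"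

definition GWN2 :: "(nat \<Rightarrow> nat \<Rightarrow> real) \<Rightarrow> ((nat set \<Rightarrow> complex) \<Rightarrow> complex) \<Rightarrow> ((nat set \<Rightarrow> complex) \<Rightarrow> complex)" where
  "GWN2 w \<Phi> = (THE \<Psi>. \<Psi> \<in> Sdual \<and>
     (\<forall>\<sigma>\<in>Gam. fock \<Psi> \<sigma> = complex_of_real (spectral w \<sigma>) * fock \<Phi> \<sigma>))"

definition ann :: "nat \<Rightarrow> ((nat set \<Rightarrow> complex) \<Rightarrow> complex) \<Rightarrow> ((nat set \<Rightarrow> complex) \<Rightarrow> complex)" where
  "ann k \<Phi> = (THE \<Psi>. \<Psi> \<in> Sdual \<and>
     (\<forall>\<sigma>\<in>Gam. fock \<Psi> \<sigma> = complex_of_real (1 - ind \<sigma> k) * fock \<Phi> (insert k \<sigma>)))"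

definition cre :: "nat \<Rightarrow> ((nat set \<Rightarrow> complex) \<Rightarrow> complex) \<Rightarrow> ((nat set \<Rightarrow> complex) \<Rightarrow> complex)" where
  "cre k \<Phi> = (THE \<Psi>. \<Psi> \<in> Sdual \<and>
     (\<forall>\<sigma>\<in>Gam. fock \<Psi> \<sigma> = complex_of_real (ind \<sigma> k) * fock \<Phi> (\<sigma> - {k})))"

end

theory Submission
  imports Defs
begin


lemma lam_ge1: "lam \<sigma> \<ge> 1"
proof -
  have "1 \<le> (\<Prod>k\<in>\<sigma>. k + 1)" by (rule prod_ge_1) simp
  then show ?thesis unfolding lam_def by linarith
qed

lemma lam_pos: "lam \<sigma> > 0"
  using lam_ge1[of \<sigma>] by linarith

lemma lam_insert_le: "finite \<sigma> \<Longrightarrow> lam (insert k \<sigma>) \<le> (real k + 1) * lam \<sigma>"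
proof (cases "k \<in> \<sigma>")
  case True
  assume "finite \<sigma>"
  then show ?thesis using True lam_ge1[of \<sigma>] by (simp add: insert_absorb mult_le_cancel_right1)
next
  case False
  assume "finite \<sigma>"
  then show ?thesis using False by (simp add: lam_def algebra_simps)
qed

lemma lam_remove: "finite \<sigma> \<Longrightarrow> k \<in> \<sigma> \<Longrightarrow> lam \<sigma> = (real k + 1) * lam (\<sigma> - {k})"
  unfolding lam_def by (simp add: prod.remove algebra_simps)

lemma lam_remove_le: "finite \<sigma> \<Longrightarrow> lam (\<sigma> - {k}) \<le> lam \<sigma>"
proof (cases "k \<in> \<sigma>")
  case True
  assume "finite \<sigma>"
  then show ?thesis using True lam_remove[of \<sigma> k] lam_ge1[of "\<sigma> - {k}"]
    by (simp add: distrib_right)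
qed simp

lemma lam_ge_elem: "finite \<sigma> \<Longrightarrow> k \<in> \<sigma> \<Longrightarrow> real k + 1 \<le> lam \<sigma>"
proof -
  assume a: "finite \<sigma>" "k \<in> \<sigma>"
  have "(real k + 1) * 1 \<le> (real k + 1) * lam (\<sigma> - {k})"
    using lam_ge1[of "\<sigma> - {k}"] by (intro mult_left_mono) auto
  then show ?thesis using lam_remove[OF a] by simp
qed

lemma card_le_lam: "finite \<sigma> \<Longrightarrow> real (card \<sigma>) \<le> lam \<sigma>"
proof -
  assume f: "finite \<sigma>"
  define L where "L = (\<Prod>k\<in>\<sigma>. k + 1)"
  have "\<sigma> \<subseteq> {..<L}"
  proof
    fix k assume "k \<in> \<sigma>"
    then have "real k + 1 \<le> real L" using lam_ge_elem[OF f] by (simp add: L_def lam_def)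
    then show "k \<in> {..<L}" by simp
  qed
  then have "card \<sigma> \<le> L" using card_mono[of "{..<L}" \<sigma>] by simp
  moreover have "lam \<sigma> = real L" unfolding lam_def L_def ..
  ultimately show ?thesis by simp
qed

lemma lam_inv_sq: "finite \<sigma> \<Longrightarrow> 1 / lam \<sigma> ^ 2 = (\<Prod>k\<in>\<sigma>. 1 / (real k + 1) ^ 2)"
proof -
  assume f: "finite \<sigma>"
  have e: "lam \<sigma> = (\<Prod>k\<in>\<sigma>. (real k + 1))"
    unfolding lam_def by (simp add: of_nat_prod add.commute)
  have "(\<Prod>k\<in>\<sigma>. 1 / (real k + 1) ^ 2) = 1 / (\<Prod>k\<in>\<sigma>. (real k + 1)) ^ 2"
    by (simp add: prod_dividef power_one_over prod_power_distrib)
  then show ?thesis using e by simp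
qed

lemma summable_inv_sq: "summable (\<lambda>k::nat. 1 / (real k + 1) ^ 2)"
proof -
  have "summable (\<lambda>n::nat. inverse (real n ^ 2))" by (rule inverse_power_summable) simp
  then have "summable (\<lambda>n. inverse (real (Suc n) ^ 2))" by (subst summable_Suc_iff)
  then show ?thesis by (simp add: divide_inverse add.commute)
qed

lemma lam_summable: "(\<lambda>\<sigma>. 1 / lam \<sigma> ^ 2) summable_on Gam"
proof (rule nonneg_bdd_above_summable_on)
  show "\<And>x. x \<in> Gam \<Longrightarrow> 0 \<le> 1 / lam x ^ 2" by simp
  define a where "a = (\<lambda>k::nat. 1 / (real k + 1) ^ 2)"
  have a0: "a k \<ge> 0" for k by (simp add: a_def)
  show "bdd_above (sum (\<lambda>\<sigma>. 1 / lam \<sigma> ^ 2) ` {F. F \<subseteq> Gam \<and> finite F})"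
  proof (rule bdd_aboveI, clarify)
    fix F assume F: "F \<subseteq> Gam" "finite F"
    define N where "N = \<Union>F"
    have fN: "finite N" using F by (auto simp: N_def Gam_def)
    have FP: "F \<subseteq> Pow N" by (auto simp: N_def)
    have "sum (\<lambda>\<sigma>. 1 / lam \<sigma> ^ 2) F = (\<Sum>\<sigma>\<in>F. \<Prod>k\<in>\<sigma>. a k)"
      using F by (intro sum.cong refl) (auto simp: Gam_def a_def lam_inv_sq)
    also have "\<dots> \<le> (\<Sum>\<sigma>\<in>Pow N. \<Prod>k\<in>\<sigma>. a k)"
      using FP fN by (intro sum_mono2) (auto intro!: prod_nonneg simp: a0)
    also have "\<dots> = (\<Prod>k\<in>N. a k + 1)"
      using prod_add[OF fN, of a "\<lambda>_. 1"] by simp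
    also have "\<dots> \<le> (\<Prod>k\<in>N. exp (a k))"
      by (intro prod_mono) (auto simp: a0 add.commute)
    also have "\<dots> = exp (sum a N)" by (simp add: exp_sum[OF fN])
    also have "\<dots> \<le> exp (suminf a)"
      using sum_le_suminf[OF summable_inv_sq[folded a_def] fN] a0 by simp
    finally show "sum (\<lambda>\<sigma>. 1 / lam \<sigma> ^ 2) F \<le> exp (suminf a)" .
  qed
qed



definition wt :: "nat \<Rightarrow> (nat set \<Rightarrow> complex) \<Rightarrow> nat set \<Rightarrow> real" where
  "wt q x \<sigma> = lam \<sigma> ^ (2 * q) * (cmod (x \<sigma>))\<^sup>2"

lemma wt_nonneg: "wt q x \<sigma> \<ge> 0"
  unfolding wt_def using lam_pos[of \<sigma>] by simp

lemma powr_nat2: "lam \<sigma> powr (2 * real q) = lam \<sigma> ^ (2 * q)"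
  using lam_pos[of \<sigma>] by (metis of_nat_mult of_nat_numeral powr_realpow)

lemma S_zero: "x \<in> Sspace \<Longrightarrow> \<sigma> \<notin> Gam \<Longrightarrow> x \<sigma> = 0"
  unfolding Sspace_def by blast

lemma S_summ: "x \<in> Sspace \<Longrightarrow> wt q x summable_on Gam"
proof -
  assume "x \<in> Sspace"
  then have "(\<lambda>\<sigma>. lam \<sigma> powr (2 * real q) * (cmod (x \<sigma>))\<^sup>2) summable_on Gam"
    unfolding Sspace_def by auto
  then show ?thesis unfolding wt_def powr_nat2 .
qed

lemma pnorm_nat: "pnorm (real q) x = sqrt (infsum (wt q x) Gam)"
  unfolding pnorm_def wt_def powr_nat2 ..

lemma SspaceI:
  assumes z: "\<And>\<sigma>. \<sigma> \<notin> Gam \<Longrightarrow> x \<sigma> = 0"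
    and s: "\<And>q. wt q x summable_on Gam"
  shows "x \<in> Sspace"
  unfolding Sspace_def
proof (intro CollectI conjI allI impI z)
  fix p :: real assume p: "0 \<le> p"
  define q where "q = nat \<lceil>p\<rceil>"
  have pq: "p \<le> real q" unfolding q_def by linarith
  show "(\<lambda>\<sigma>. lam \<sigma> powr (2 * p) * (cmod (x \<sigma>))\<^sup>2) summable_on Gam"
  proof (rule summable_on_comparison_test[OF s[of q]])
    fix \<sigma>
    have "lam \<sigma> powr (2 * p) \<le> lam \<sigma> powr (2 * real q)"
      using lam_ge1[of \<sigma>] pq by (intro powr_mono) auto
    then show "lam \<sigma> powr (2 * p) * (cmod (x \<sigma>))\<^sup>2 \<le> wt q x \<sigma>"
      unfolding wt_def powr_nat2[symmetric] by (intro mult_right_mono) auto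
    show "0 \<le> lam \<sigma> powr (2 * p) * (cmod (x \<sigma>))\<^sup>2" by simp
  qed
qed

lemma S_comb:
  assumes x: "x \<in> Sspace" and z: "z \<in> Sspace"
    and b: "\<And>\<sigma>. cmod (y \<sigma>) \<le> a * cmod (x \<sigma>) + b * cmod (z \<sigma>)"
    and a0: "a \<ge> 0" and b0: "b \<ge> 0"
  shows "y \<in> Sspace"
proof (rule SspaceI)
  fix \<sigma> assume "\<sigma> \<notin> Gam"
  then show "y \<sigma> = 0" using b[of \<sigma>] S_zero[OF x] S_zero[OF z] by simp
next
  fix q
  have "(\<lambda>\<sigma>. 2 * a\<^sup>2 * wt q x \<sigma> + 2 * b\<^sup>2 * wt q z \<sigma>) summable_on Gam"
    by (intro summable_on_add summable_on_cmult_right S_summ x z)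
  then show "wt q y summable_on Gam"
  proof (rule summable_on_comparison_test)
    fix \<sigma>
    show "0 \<le> wt q y \<sigma>" by (rule wt_nonneg)
    have l: "0 \<le> lam \<sigma> ^ (2 * q)" using lam_pos[of \<sigma>] by simp
    have "(cmod (y \<sigma>))\<^sup>2 \<le> (a * cmod (x \<sigma>) + b * cmod (z \<sigma>))\<^sup>2"
      using b[of \<sigma>] by (intro power_mono) auto
    also have "\<dots> \<le> 2 * a\<^sup>2 * (cmod (x \<sigma>))\<^sup>2 + 2 * b\<^sup>2 * (cmod (z \<sigma>))\<^sup>2"
      using sum_squares_ge_zero[of "a * cmod (x \<sigma>) - b * cmod (z \<sigma>)" 0]
      by (simp add: power2_eq_square algebra_simps)
    finally have "lam \<sigma> ^ (2 * q) * (cmod (y \<sigma>))\<^sup>2 \<le> lam \<sigma> ^ (2 * q) * (2 * a\<^sup>2 * (cmod (x \<sigma>))\<^sup>2 + 2 * b\<^sup>2 * (cmod (z \<sigma>))\<^sup>2)"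
      by (intro mult_left_mono l)
    then show "wt q y \<sigma> \<le> 2 * a\<^sup>2 * wt q x \<sigma> + 2 * b\<^sup>2 * wt q z \<sigma>"
      unfolding wt_def by (simp add: algebra_simps)
  qed
qed

lemma S_fin:
  assumes "finite F" "F \<subseteq> Gam" "\<And>\<sigma>. \<sigma> \<notin> F \<Longrightarrow> x \<sigma> = 0"
  shows "x \<in> Sspace"
proof (rule SspaceI)
  fix \<sigma> assume "\<sigma> \<notin> Gam" then show "x \<sigma> = 0" using assms by auto
next
  fix q
  have "wt q x summable_on F" using assms(1) by simp
  then show "wt q x summable_on Gam"
    by (rule summable_on_cong_neutral[THEN iffD1, rotated -1]) (use assms in \<open>auto simp: wt_def\<close>)
qed

lemma S_add: "x \<in> Sspace \<Longrightarrow> y \<in> Sspace \<Longrightarrow> (\<lambda>\<sigma>. x \<sigma> + y \<sigma>) \<in> Sspace"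
  by (rule S_comb[where a=1 and b=1 and x=x and z=y]) (auto simp: norm_triangle_ineq)

lemma S_scale: "x \<in> Sspace \<Longrightarrow> (\<lambda>\<sigma>. c * x \<sigma>) \<in> Sspace"
  by (rule S_comb[where a="cmod c" and b=0 and z=x]) (auto simp: norm_mult)

lemma Zb_S: "\<sigma> \<in> Gam \<Longrightarrow> Zb \<sigma> \<in> Sspace"
  by (rule S_fin[of "{\<sigma>}"]) (auto simp: Zb_def)

lemma pnorm_Zb: "\<sigma> \<in> Gam \<Longrightarrow> pnorm p (Zb \<sigma>) = lam \<sigma> powr p"
proof -
  assume "\<sigma> \<in> Gam"
  have "(\<Sum>\<^sub>\<infinity>\<tau>\<in>Gam. lam \<tau> powr (2 * p) * (cmod (Zb \<sigma> \<tau>))\<^sup>2) = (\<Sum>\<^sub>\<infinity>\<tau>\<in>{\<sigma>}. lam \<tau> powr (2 * p) * (cmod (Zb \<sigma> \<tau>))\<^sup>2)"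
    by (rule infsum_cong_neutral) (use \<open>\<sigma> \<in> Gam\<close> in \<open>auto simp: Zb_def\<close>)
  also have "\<dots> = lam \<sigma> powr p * lam \<sigma> powr p"
    by (simp add: Zb_def powr_add[symmetric])
  finally show ?thesis unfolding pnorm_def by (simp add: real_sqrt_mult)
qed

lemma coef_bound:
  assumes x: "x \<in> Sspace" and s: "\<sigma> \<in> Gam"
  shows "lam \<sigma> ^ q * cmod (x \<sigma>) \<le> pnorm (real q) x"
proof -
  have "wt q x \<sigma> = infsum (wt q x) {\<sigma>}" by simp
  also have "\<dots> \<le> infsum (wt q x) Gam"
  proof (rule infsum_mono_neutral[OF _ S_summ[OF x]])
    show "wt q x summable_on {\<sigma>}" by simp
    show "\<And>\<tau>. \<tau> \<in> Gam - {\<sigma>} \<Longrightarrow> 0 \<le> wt q x \<tau>" by (rule wt_nonneg)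
  qed (use s in simp_all)
  finally have "sqrt (wt q x \<sigma>) \<le> pnorm (real q) x" unfolding pnorm_nat by simp
  moreover have "sqrt (wt q x \<sigma>) = lam \<sigma> ^ q * cmod (x \<sigma>)"
  proof -
    have "wt q x \<sigma> = (lam \<sigma> ^ q * cmod (x \<sigma>))\<^sup>2"
      unfolding wt_def power_even_eq power_mult_distrib ..
    then show ?thesis using lam_pos[of \<sigma>] by simp
  qed
  ultimately show ?thesis by simp
qed

lemma pnorm_nonneg: "pnorm p x \<ge> 0"
  unfolding pnorm_def by (simp add: infsum_nonneg)

lemma pnorm_mono:
  assumes x: "x \<in> Sspace" and p: "0 \<le> p" "p \<le> p'"
  shows "pnorm p x \<le> pnorm p' x"
proof -
  have "(\<Sum>\<^sub>\<infinity>\<sigma>\<in>Gam. lam \<sigma> powr (2 * p) * (cmod (x \<sigma>))\<^sup>2) \<le> (\<Sum>\<^sub>\<infinity>\<sigma>\<in>Gam. lam \<sigma> powr (2 * p') * (cmod (x \<sigma>))\<^sup>2)"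
  proof (rule infsum_mono)
    show "(\<lambda>\<sigma>. lam \<sigma> powr (2 * p) * (cmod (x \<sigma>))\<^sup>2) summable_on Gam"
      using x p unfolding Sspace_def by auto
    show "(\<lambda>\<sigma>. lam \<sigma> powr (2 * p') * (cmod (x \<sigma>))\<^sup>2) summable_on Gam"
      using x p unfolding Sspace_def by auto
    fix \<sigma>
    have "lam \<sigma> powr (2 * p) \<le> lam \<sigma> powr (2 * p')"
      using lam_ge1[of \<sigma>] p by (intro powr_mono) auto
    then show "lam \<sigma> powr (2 * p) * (cmod (x \<sigma>))\<^sup>2 \<le> lam \<sigma> powr (2 * p') * (cmod (x \<sigma>))\<^sup>2"
      by (intro mult_right_mono) auto
  qed
  then show ?thesis unfolding pnorm_def by (rule real_sqrt_le_mono)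
qed

lemma Sdual_bound:
  assumes "\<Psi> \<in> Sdual"
  obtains q :: nat and C where "C \<ge> 0" "\<And>x. x \<in> Sspace \<Longrightarrow> cmod (\<Psi> x) \<le> C * pnorm (real q) x"
proof -
  from assms obtain p C where p: "p \<ge> 0" and C: "\<forall>x\<in>Sspace. cmod (\<Psi> x) \<le> C * pnorm p x"
    unfolding Sdual_def by blast
  define q where "q = nat \<lceil>p\<rceil>"
  have pq: "p \<le> real q" unfolding q_def by linarith
  show ?thesis
  proof (rule that[of "max C 0" q])
    fix x assume x: "x \<in> Sspace"
    have "cmod (\<Psi> x) \<le> C * pnorm p x" using C x by blast
    also have "\<dots> \<le> max C 0 * pnorm p x" by (intro mult_right_mono pnorm_nonneg) auto
    also have "\<dots> \<le> max C 0 * pnorm (real q) x" by (intro mult_left_mono pnorm_mono x p pq) auto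
    finally show "cmod (\<Psi> x) \<le> max C 0 * pnorm (real q) x" .
  qed auto
qed

lemma Sdual_add: "\<Psi> \<in> Sdual \<Longrightarrow> x \<in> Sspace \<Longrightarrow> y \<in> Sspace \<Longrightarrow> \<Psi> (\<lambda>\<sigma>. x \<sigma> + y \<sigma>) = \<Psi> x + \<Psi> y"
  unfolding Sdual_def by blast
lemma Sdual_scale: "\<Psi> \<in> Sdual \<Longrightarrow> x \<in> Sspace \<Longrightarrow> \<Psi> (\<lambda>\<sigma>. c * x \<sigma>) = c * \<Psi> x"
  unfolding Sdual_def by blast
lemma Sdual_out: "\<Psi> \<in> Sdual \<Longrightarrow> x \<notin> Sspace \<Longrightarrow> \<Psi> x = 0"
  unfolding Sdual_def by blast



lemma dual_fin:
  assumes \<Psi>: "\<Psi> \<in> Sdual" and F: "finite F" "F \<subseteq> Gam"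
  shows "\<Psi> (\<lambda>\<tau>. if \<tau> \<in> F then x \<tau> else 0) = (\<Sum>\<sigma>\<in>F. x \<sigma> * fock \<Psi> \<sigma>)"
  using F
proof (induction F rule: finite_induct)
  case empty
  have z: "(\<lambda>\<tau>::nat set. 0::complex) \<in> Sspace" by (rule S_fin[of "{}"]) auto
  have "\<Psi> (\<lambda>\<tau>. 0 * (0::complex)) = 0 * \<Psi> (\<lambda>\<tau>. 0)" by (rule Sdual_scale[OF \<Psi> z])
  then show ?case by simp
next
  case (insert a F)
  have a: "a \<in> Gam" and FG: "F \<subseteq> Gam" using insert.prems by auto
  have xF: "(\<lambda>\<tau>. if \<tau> \<in> F then x \<tau> else 0) \<in> Sspace"
    by (rule S_fin[OF insert.hyps(1) FG]) auto
  have za: "(\<lambda>\<tau>. x a * Zb a \<tau>) \<in> Sspace" by (rule S_scale[OF Zb_S[OF a]])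
  have eq: "(\<lambda>\<tau>. if \<tau> \<in> insert a F then x \<tau> else 0)
      = (\<lambda>\<tau>. (if \<tau> \<in> F then x \<tau> else 0) + x a * Zb a \<tau>)"
    using insert.hyps(2) by (auto simp: Zb_def)
  have "\<Psi> (\<lambda>\<tau>. if \<tau> \<in> insert a F then x \<tau> else 0)
      = \<Psi> (\<lambda>\<tau>. if \<tau> \<in> F then x \<tau> else 0) + \<Psi> (\<lambda>\<tau>. x a * Zb a \<tau>)"
    unfolding eq by (rule Sdual_add[OF \<Psi> xF za])
  also have "\<Psi> (\<lambda>\<tau>. x a * Zb a \<tau>) = x a * fock \<Psi> a"
    unfolding fock_def by (rule Sdual_scale[OF \<Psi> Zb_S[OF a]])
  finally show ?case using insert FG by simp
qed

lemma dual_rep: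
  assumes \<Psi>: "\<Psi> \<in> Sdual" and x: "x \<in> Sspace"
  shows "((\<lambda>\<sigma>. x \<sigma> * fock \<Psi> \<sigma>) has_sum \<Psi> x) Gam"
proof -
  obtain q C where C0: "C \<ge> 0" and C: "\<And>y. y \<in> Sspace \<Longrightarrow> cmod (\<Psi> y) \<le> C * pnorm (real q) y"
    using Sdual_bound[OF \<Psi>] by blast
  define f where "f \<sigma> = x \<sigma> * fock \<Psi> \<sigma>" for \<sigma>
  define I where "I = infsum (wt q x) Gam"
  have hs: "(wt q x has_sum I) Gam" unfolding I_def using S_summ[OF x] by simp
  have bound: "cmod (\<Psi> x - sum f F) \<le> C * sqrt (I - sum (wt q x) F)"
    if F: "finite F" "F \<subseteq> Gam" for F
  proof -
    define xF where "xF = (\<lambda>\<tau>. if \<tau> \<in> F then x \<tau> else 0)"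
    define xR where "xR = (\<lambda>\<tau>. if \<tau> \<in> F then 0 else x \<tau>)"
    have xFS: "xF \<in> Sspace" unfolding xF_def by (rule S_fin[OF F]) auto
    have xRS: "xR \<in> Sspace" by (rule S_comb[where a=1 and b=0 and x=x and z=x]) (use x in \<open>auto simp: xR_def\<close>)
    have "x = (\<lambda>\<tau>. xF \<tau> + xR \<tau>)" by (auto simp: xF_def xR_def)
    then have "\<Psi> x = \<Psi> xF + \<Psi> xR" using Sdual_add[OF \<Psi> xFS xRS] by simp
    moreover have "\<Psi> xF = sum f F" unfolding xF_def f_def by (rule dual_fin[OF \<Psi> F])
    ultimately have "\<Psi> x - sum f F = \<Psi> xR" by simp
    then have "cmod (\<Psi> x - sum f F) \<le> C * pnorm (real q) xR" using C[OF xRS] by simp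
    also have "pnorm (real q) xR = sqrt (I - sum (wt q x) F)"
    proof -
      have "infsum (wt q xR) Gam = infsum (wt q x) (Gam - F)"
        by (rule infsum_cong_neutral) (auto simp: xR_def wt_def)
      also have "\<dots> = I - sum (wt q x) F"
        unfolding I_def using infsum_Diff[OF S_summ[OF x] _ F(2), of q] F(1) by simp
      finally show ?thesis unfolding pnorm_nat by simp
    qed
    finally show ?thesis .
  qed
  have lim: "((\<lambda>F. C * sqrt (I - sum (wt q x) F)) \<longlongrightarrow> C * sqrt (I - I)) (finite_subsets_at_top Gam)"
    using hs unfolding has_sum_def by (intro tendsto_intros)
  have "((\<lambda>F. \<Psi> x - sum f F) \<longlongrightarrow> 0) (finite_subsets_at_top Gam)"
  proof (rule Lim_null_comparison)
    show "\<forall>\<^sub>F F in finite_subsets_at_top Gam. norm (\<Psi> x - sum f F) \<le> C * sqrt (I - sum (wt q x) F)"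
      by (rule eventually_finite_subsets_at_top_weakI) (use bound in auto)
    show "((\<lambda>F. C * sqrt (I - sum (wt q x) F)) \<longlongrightarrow> 0) (finite_subsets_at_top Gam)"
      using lim by simp
  qed
  then have "((\<lambda>F. \<Psi> x - (\<Psi> x - sum f F)) \<longlongrightarrow> \<Psi> x - 0) (finite_subsets_at_top Gam)"
    by (intro tendsto_intros)
  then show ?thesis unfolding has_sum_def f_def by simp
qed

lemma dual_unique:
  assumes "\<Psi>1 \<in> Sdual" "\<Psi>2 \<in> Sdual" "\<And>\<sigma>. \<sigma> \<in> Gam \<Longrightarrow> fock \<Psi>1 \<sigma> = fock \<Psi>2 \<sigma>"
  shows "\<Psi>1 = \<Psi>2"
proof
  fix x
  show "\<Psi>1 x = \<Psi>2 x"
  proof (cases "x \<in> Sspace")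
    case True
    have "((\<lambda>\<sigma>. x \<sigma> * fock \<Psi>1 \<sigma>) has_sum \<Psi>2 x) Gam"
      using dual_rep[OF assms(2) True] by (rule has_sum_cong[THEN iffD1, rotated]) (simp add: assms(3))
    then show ?thesis using dual_rep[OF assms(1) True] has_sum_unique by blast
  next
    case False
    then show ?thesis using Sdual_out assms by metis
  qed
qed

definition mk :: "(nat set \<Rightarrow> complex) \<Rightarrow> (nat set \<Rightarrow> complex) \<Rightarrow> complex" where
  "mk g x = (if x \<in> Sspace then infsum (\<lambda>\<sigma>. x \<sigma> * g \<sigma>) Gam else 0)"

lemma mk_abs:
  assumes g: "\<And>\<sigma>. \<sigma> \<in> Gam \<Longrightarrow> cmod (g \<sigma>) \<le> K * lam \<sigma> ^ r" and x: "x \<in> Sspace" and \<sigma>: "\<sigma> \<in> Gam"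
  shows "cmod (x \<sigma> * g \<sigma>) \<le> K * pnorm (real (r + 2)) x * (1 / lam \<sigma> ^ 2)"
proof -
  have l: "lam \<sigma> > 0" by (rule lam_pos)
  have K0: "K * lam \<sigma> ^ r \<ge> 0" using g[OF \<sigma>] norm_ge_zero order_trans by blast
  have "cmod (x \<sigma> * g \<sigma>) = cmod (x \<sigma>) * cmod (g \<sigma>)" by (simp add: norm_mult)
  also have "\<dots> \<le> cmod (x \<sigma>) * (K * lam \<sigma> ^ r)" by (intro mult_left_mono g \<sigma>) auto
  also have "\<dots> = K * (lam \<sigma> ^ (r + 2) * cmod (x \<sigma>)) * (1 / lam \<sigma> ^ 2)"
    using l by (simp add: power_add field_simps power2_eq_square)
  also have "\<dots> \<le> K * pnorm (real (r + 2)) x * (1 / lam \<sigma> ^ 2)"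
  proof -
    have lr: "lam \<sigma> ^ r > 0" using l by simp
    have K: "K \<ge> 0" using K0 lr by (auto simp: zero_le_mult_iff)
    show ?thesis using coef_bound[OF x \<sigma>, of "r+2"] K l
      by (intro mult_right_mono mult_left_mono) auto
  qed
  finally show ?thesis .
qed

lemma mk_summable:
  assumes g: "\<And>\<sigma>. \<sigma> \<in> Gam \<Longrightarrow> cmod (g \<sigma>) \<le> K * lam \<sigma> ^ r" and x: "x \<in> Sspace"
  shows "(\<lambda>\<sigma>. x \<sigma> * g \<sigma>) summable_on Gam"
proof -
  have "(\<lambda>\<sigma>. norm (x \<sigma> * g \<sigma>)) summable_on Gam"
    by (rule summable_on_comparison_test[OF summable_on_cmult_right[OF lam_summable, of "K * pnorm (real (r + 2)) x"]])
       (use mk_abs[OF g x] in auto)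
  then show ?thesis by (rule abs_summable_summable)
qed

lemma mk_Sdual:
  assumes g: "\<And>\<sigma>. \<sigma> \<in> Gam \<Longrightarrow> cmod (g \<sigma>) \<le> K * lam \<sigma> ^ r"
  shows "mk g \<in> Sdual" and "\<And>\<sigma>. \<sigma> \<in> Gam \<Longrightarrow> fock (mk g) \<sigma> = g \<sigma>"
proof -
  have sm: "\<And>x. x \<in> Sspace \<Longrightarrow> (\<lambda>\<sigma>. x \<sigma> * g \<sigma>) summable_on Gam"
    using mk_summable[of g K r] g by blast
  define L where "L = infsum (\<lambda>\<sigma>. 1 / lam \<sigma> ^ 2) Gam"
  show "mk g \<in> Sdual"
    unfolding Sdual_def
  proof (intro CollectI conjI allI impI)
    fix x y assume x: "x \<in> Sspace" and y: "y \<in> Sspace"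
    have "mk g (\<lambda>\<sigma>. x \<sigma> + y \<sigma>) = infsum (\<lambda>\<sigma>. x \<sigma> * g \<sigma> + y \<sigma> * g \<sigma>) Gam"
      unfolding mk_def using S_add[OF x y] by (simp add: distrib_right)
    also have "\<dots> = mk g x + mk g y"
      unfolding mk_def using x y by (simp add: infsum_add sm)
    finally show "mk g (\<lambda>\<sigma>. x \<sigma> + y \<sigma>) = mk g x + mk g y" .
  next
    fix c x assume x: "x \<in> Sspace"
    have "mk g (\<lambda>\<sigma>. c * x \<sigma>) = infsum (\<lambda>\<sigma>. c * (x \<sigma> * g \<sigma>)) Gam"
      unfolding mk_def using S_scale[OF x] by (simp add: mult.assoc)
    also have "\<dots> = c * mk g x"
      unfolding mk_def using x by (simp add: infsum_cmult_right sm)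
    finally show "mk g (\<lambda>\<sigma>. c * x \<sigma>) = c * mk g x" .
  next
    fix x assume "x \<notin> Sspace" then show "mk g x = 0" by (simp add: mk_def)
  next
    show "\<exists>p\<ge>0. \<exists>C. \<forall>x\<in>Sspace. cmod (mk g x) \<le> C * pnorm p x"
    proof (intro exI conjI ballI)
      show "0 \<le> real (r + 2)" by simp
      fix x assume x: "x \<in> Sspace"
      have "norm (infsum (\<lambda>\<sigma>. x \<sigma> * g \<sigma>) Gam) \<le> infsum (\<lambda>\<sigma>. K * pnorm (real (r + 2)) x * (1 / lam \<sigma> ^ 2)) Gam"
        by (rule norm_infsum_le[OF has_sum_infsum[OF sm[OF x]] has_sum_infsum[OF summable_on_cmult_right[OF lam_summable]]])
           (use mk_abs[of g K r x] g x in blast)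
      also have "\<dots> = K * L * pnorm (real (r + 2)) x"
        unfolding L_def using infsum_cmult_right[of "K * pnorm (real (r + 2)) x" "\<lambda>\<sigma>. 1 / lam \<sigma> ^ 2" Gam] lam_summable
        by (simp add: mult_ac)
      finally show "cmod (mk g x) \<le> K * L * pnorm (real (r + 2)) x" using x by (simp add: mk_def)
    qed
  qed
next
  fix \<sigma> assume s: "\<sigma> \<in> Gam"
  have "infsum (\<lambda>\<tau>. Zb \<sigma> \<tau> * g \<tau>) Gam = infsum (\<lambda>\<tau>. Zb \<sigma> \<tau> * g \<tau>) {\<sigma>}"
    by (rule infsum_cong_neutral) (use s in \<open>auto simp: Zb_def\<close>)
  then show "fock (mk g) \<sigma> = g \<sigma>"
    unfolding fock_def mk_def using Zb_S[OF s] by (simp add: Zb_def)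
qed

lemma THE_mk:
  assumes g: "\<And>\<sigma>. \<sigma> \<in> Gam \<Longrightarrow> cmod (g \<sigma>) \<le> K * lam \<sigma> ^ r"
  shows "(THE \<Psi>. \<Psi> \<in> Sdual \<and> (\<forall>\<sigma>\<in>Gam. fock \<Psi> \<sigma> = g \<sigma>)) = mk g"
proof (rule the_equality)
  show "mk g \<in> Sdual \<and> (\<forall>\<sigma>\<in>Gam. fock (mk g) \<sigma> = g \<sigma>)" using mk_Sdual[OF g] by blast
  fix \<Psi> assume "\<Psi> \<in> Sdual \<and> (\<forall>\<sigma>\<in>Gam. fock \<Psi> \<sigma> = g \<sigma>)"
  then show "\<Psi> = mk g" using mk_Sdual[OF g] by (intro dual_unique) auto
qed

lemma fock_bound:
  assumes "\<Phi> \<in> Sdual"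
  obtains C r where "C \<ge> 0" "\<And>\<sigma>. \<sigma> \<in> Gam \<Longrightarrow> cmod (fock \<Phi> \<sigma>) \<le> C * lam \<sigma> ^ r"
proof -
  obtain q C where C0: "C \<ge> 0" and C: "\<And>y. y \<in> Sspace \<Longrightarrow> cmod (\<Phi> y) \<le> C * pnorm (real q) y"
    using Sdual_bound[OF assms] by blast
  show ?thesis
  proof (rule that[OF C0])
    fix \<sigma> assume s: "\<sigma> \<in> Gam"
    have "cmod (fock \<Phi> \<sigma>) \<le> C * pnorm (real q) (Zb \<sigma>)" unfolding fock_def by (rule C[OF Zb_S[OF s]])
    also have "pnorm (real q) (Zb \<sigma>) = lam \<sigma> ^ q"
      using pnorm_Zb[OF s] lam_pos[of \<sigma>] by (simp add: powr_realpow)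
    finally show "cmod (fock \<Phi> \<sigma>) \<le> C * lam \<sigma> ^ q" .
  qed
qed



lemma Gam_insert: "\<sigma> \<in> Gam \<Longrightarrow> insert k \<sigma> \<in> Gam" by (simp add: Gam_def)
lemma Gam_remove: "\<sigma> \<in> Gam \<Longrightarrow> \<sigma> - {k} \<in> Gam" by (simp add: Gam_def)
lemma ind_01: "0 \<le> ind \<sigma> k" "ind \<sigma> k \<le> 1" by (auto simp: ind_def)

lemma ann_props:
  assumes \<Phi>: "\<Phi> \<in> Sdual"
  shows "ann k \<Phi> \<in> Sdual"
    and "\<And>\<sigma>. \<sigma> \<in> Gam \<Longrightarrow> fock (ann k \<Phi>) \<sigma> = complex_of_real (1 - ind \<sigma> k) * fock \<Phi> (insert k \<sigma>)"
proof -
  obtain C r where C0: "C \<ge> 0" and C: "\<And>\<sigma>. \<sigma> \<in> Gam \<Longrightarrow> cmod (fock \<Phi> \<sigma>) \<le> C * lam \<sigma> ^ r"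
    using fock_bound[OF \<Phi>] by blast
  define g where "g = (\<lambda>\<sigma>. complex_of_real (1 - ind \<sigma> k) * fock \<Phi> (insert k \<sigma>))"
  have gb: "cmod (g \<sigma>) \<le> (C * (real k + 1) ^ r) * lam \<sigma> ^ r" if s: "\<sigma> \<in> Gam" for \<sigma>
  proof -
    have "cmod (g \<sigma>) \<le> 1 * cmod (fock \<Phi> (insert k \<sigma>))"
      unfolding g_def ind_def by (auto simp: norm_mult)
    also have "\<dots> \<le> C * lam (insert k \<sigma>) ^ r" using C[OF Gam_insert[OF s]] by simp
    also have "\<dots> \<le> C * ((real k + 1) * lam \<sigma>) ^ r"
      using lam_insert_le[of \<sigma> k] s lam_ge1[of "insert k \<sigma>"] C0
      by (intro mult_left_mono power_mono) (auto simp: Gam_def)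
    finally show ?thesis by (simp add: power_mult_distrib mult_ac)
  qed
  have e: "ann k \<Phi> = mk g" unfolding ann_def using THE_mk[OF gb] by (simp add: g_def)
  show "ann k \<Phi> \<in> Sdual" unfolding e by (rule mk_Sdual(1)[OF gb])
  show "\<And>\<sigma>. \<sigma> \<in> Gam \<Longrightarrow> fock (ann k \<Phi>) \<sigma> = complex_of_real (1 - ind \<sigma> k) * fock \<Phi> (insert k \<sigma>)"
    unfolding e using mk_Sdual(2)[OF gb] by (simp add: g_def)
qed

lemma cre_props:
  assumes \<Phi>: "\<Phi> \<in> Sdual"
  shows "cre k \<Phi> \<in> Sdual"
    and "\<And>\<sigma>. \<sigma> \<in> Gam \<Longrightarrow> fock (cre k \<Phi>) \<sigma> = complex_of_real (ind \<sigma> k) * fock \<Phi> (\<sigma> - {k})"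
proof -
  obtain C r where C0: "C \<ge> 0" and C: "\<And>\<sigma>. \<sigma> \<in> Gam \<Longrightarrow> cmod (fock \<Phi> \<sigma>) \<le> C * lam \<sigma> ^ r"
    using fock_bound[OF \<Phi>] by blast
  define g where "g = (\<lambda>\<sigma>. complex_of_real (ind \<sigma> k) * fock \<Phi> (\<sigma> - {k}))"
  have gb: "cmod (g \<sigma>) \<le> C * lam \<sigma> ^ r" if s: "\<sigma> \<in> Gam" for \<sigma>
  proof -
    have "cmod (g \<sigma>) \<le> 1 * cmod (fock \<Phi> (\<sigma> - {k}))"
      unfolding g_def ind_def by (auto simp: norm_mult)
    also have "\<dots> \<le> C * lam (\<sigma> - {k}) ^ r" using C[OF Gam_remove[OF s]] by simp
    also have "\<dots> \<le> C * lam \<sigma> ^ r"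
      using lam_remove_le[of \<sigma> k] s lam_ge1[of "\<sigma> - {k}"] C0
      by (intro mult_left_mono power_mono) (auto simp: Gam_def)
    finally show ?thesis .
  qed
  have e: "cre k \<Phi> = mk g" unfolding cre_def using THE_mk[OF gb] by (simp add: g_def)
  show "cre k \<Phi> \<in> Sdual" unfolding e by (rule mk_Sdual(1)[OF gb])
  show "\<And>\<sigma>. \<sigma> \<in> Gam \<Longrightarrow> fock (cre k \<Phi>) \<sigma> = complex_of_real (ind \<sigma> k) * fock \<Phi> (\<sigma> - {k})"
    unfolding e using mk_Sdual(2)[OF gb] by (simp add: g_def)
qed

definition ee :: "nat \<Rightarrow> nat \<Rightarrow> nat set \<Rightarrow> real" where
  "ee j k \<sigma> = ind \<sigma> k * (if j = k then 1 else 1 - ind \<sigma> j)"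

lemma T_props:
  assumes \<Phi>: "\<Phi> \<in> Sdual"
  shows "cre k (ann j (cre j (ann k \<Phi>))) \<in> Sdual"
    and "\<And>\<sigma>. \<sigma> \<in> Gam \<Longrightarrow> fock (cre k (ann j (cre j (ann k \<Phi>)))) \<sigma> = complex_of_real (ee j k \<sigma>) * fock \<Phi> \<sigma>"
proof -
  note a1 = ann_props[OF \<Phi>, where k=k]
  note c1 = cre_props[OF a1(1), where k=j]
  note a2 = ann_props[OF c1(1), where k=j]
  note c2 = cre_props[OF a2(1), where k=k]
  show "cre k (ann j (cre j (ann k \<Phi>))) \<in> Sdual" by (rule c2(1))
  fix \<sigma> assume s: "\<sigma> \<in> Gam"
  have s1: "\<sigma> - {k} \<in> Gam" "insert j (\<sigma> - {k}) \<in> Gam" "insert j (\<sigma> - {k}) - {j} \<in> Gam"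
    using s by (auto simp: Gam_def)
  show "fock (cre k (ann j (cre j (ann k \<Phi>)))) \<sigma> = complex_of_real (ee j k \<sigma>) * fock \<Phi> \<sigma>"
  proof (cases "k \<in> \<sigma>")
    case False
    then show ?thesis using c2(2)[OF s] by (simp add: ee_def ind_def)
  next
    case True
    show ?thesis
    proof (cases "j \<in> \<sigma> - {k}")
      case True
      then show ?thesis using c2(2)[OF s] a2(2)[OF s1(1)] \<open>k \<in> \<sigma>\<close> by (auto simp: ee_def ind_def)
    next
      case False
      then have e1: "insert j (\<sigma> - {k}) - {j} = \<sigma> - {k}" by auto
      have e2: "insert k (\<sigma> - {k}) = \<sigma>" using \<open>k \<in> \<sigma>\<close> by auto
      have "fock (cre k (ann j (cre j (ann k \<Phi>)))) \<sigma> = fock \<Phi> \<sigma>"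
        using c2(2)[OF s] a2(2)[OF s1(1)] c1(2)[OF s1(2)] a1(2)[OF s1(3)] \<open>k \<in> \<sigma>\<close> False
        by (auto simp: ind_def e1 e2 insert_absorb)
      moreover have "ee j k \<sigma> = 1" using \<open>k \<in> \<sigma>\<close> False by (auto simp: ee_def ind_def)
      ultimately show ?thesis by simp
    qed
  qed
qed



lemma has_sum_sum_fin:
  fixes f :: "'i \<Rightarrow> 'a \<Rightarrow> 'b::topological_comm_monoid_add"
  assumes "finite I" "\<And>i. i \<in> I \<Longrightarrow> (f i has_sum a i) A"
  shows "((\<lambda>x. \<Sum>i\<in>I. f i x) has_sum (\<Sum>i\<in>I. a i)) A"
  using assms
proof (induction I rule: finite_induct)
  case empty then show ?case by simp
next
  case (insert i I)
  have fi: "(f i has_sum a i) A" using insert.prems by simp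
  have IH: "((\<lambda>x. \<Sum>i\<in>I. f i x) has_sum sum a I) A" using insert.IH insert.prems by simp
  show ?case using insert.hyps has_sum_add[OF fi IH] by simp
qed

lemma w_nonneg: "is_2D_weight w \<Longrightarrow> 0 \<le> w j k"
  unfolding is_2D_weight_def by blast
lemma w_summ: "is_2D_weight w \<Longrightarrow> summable (\<lambda>j. w j k)"
  unfolding is_2D_weight_def by blast

lemma w_col_summ: "is_2D_weight w \<Longrightarrow> summable (\<lambda>j. (1 - ind \<sigma> j) * w j k)"
  by (rule summable_comparison_test'[where N=0 and g="\<lambda>j. w j k"]) (auto simp: ind_def w_nonneg w_summ)

lemma spectral_eq:
  assumes w: "is_2D_weight w" and s: "\<sigma> \<in> Gam"
  shows "spectral w \<sigma> = (\<Sum>k\<in>\<sigma>. w k k + (\<Sum>j. (1 - ind \<sigma> j) * w j k))"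
proof -
  have f: "finite \<sigma>" using s by (simp add: Gam_def)
  have t1: "(\<Sum>\<^sub>\<infinity>j. ind \<sigma> j * w j j) = (\<Sum>j\<in>\<sigma>. w j j)"
  proof -
    have "(\<Sum>\<^sub>\<infinity>j. ind \<sigma> j * w j j) = (\<Sum>\<^sub>\<infinity>j\<in>\<sigma>. ind \<sigma> j * w j j)"
      by (rule infsum_cong_neutral) (auto simp: ind_def)
    then show ?thesis using f by (simp add: ind_def)
  qed
  define S where "S k = (\<Sum>j. (1 - ind \<sigma> j) * w j k)" for k
  have hk: "((\<lambda>(j, k'). if k' = k then (1 - ind \<sigma> j) * w j k else 0) has_sum S k) UNIV" for k
  proof -
    have a: "((\<lambda>j. (1 - ind \<sigma> j) * w j k) has_sum S k) UNIV"
      unfolding S_def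
      by (rule sums_nonneg_imp_has_sum[OF summable_sums[OF w_col_summ[OF w]]])
         (auto simp: ind_def w_nonneg[OF w])
    have "inj (\<lambda>j::nat. (j, k))" by (auto simp: inj_def)
    then have "((\<lambda>(j, k'). if k' = k then (1 - ind \<sigma> j) * w j k else 0) has_sum S k) (range (\<lambda>j. (j, k)))"
      using a by (subst has_sum_reindex) (auto simp: o_def)
    then show ?thesis
      by (rule has_sum_cong_neutral[THEN iffD1, rotated -1]) auto
  qed
  have "((\<lambda>x. \<Sum>k\<in>\<sigma>. (\<lambda>(j, k'). if k' = k then (1 - ind \<sigma> j) * w j k else 0) x) has_sum (\<Sum>k\<in>\<sigma>. S k)) UNIV"
    by (rule has_sum_sum_fin[OF f hk])
  moreover have "(\<lambda>x. \<Sum>k\<in>\<sigma>. (\<lambda>(j, k'). if k' = k then (1 - ind \<sigma> j) * w j k else 0) x)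
      = (\<lambda>(j, k). (1 - ind \<sigma> j) * ind \<sigma> k * w j k)"
    using f by (simp add: fun_eq_iff ind_def split_paired_All)
  ultimately have "((\<lambda>(j, k). (1 - ind \<sigma> j) * ind \<sigma> k * w j k) has_sum (\<Sum>k\<in>\<sigma>. S k)) UNIV"
    by simp
  then have t2: "(\<Sum>\<^sub>\<infinity>(j, k). (1 - ind \<sigma> j) * ind \<sigma> k * w j k) = (\<Sum>k\<in>\<sigma>. S k)"
    by (rule infsumI)
  show ?thesis unfolding spectral_def t1 t2 S_def by (simp add: sum.distrib)
qed

lemma weight_bound:
  assumes w: "is_2D_weight w"
  obtains W where "W \<ge> 0" "\<And>k. (\<Sum>j. w j k) \<le> W"
proof -
  obtain W where W: "\<And>k. (\<Sum>j. w j k) \<le> W"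
    using w unfolding is_2D_weight_def bdd_above_def by auto
  have "0 \<le> (\<Sum>j. w j 0)" by (rule suminf_nonneg[OF w_summ[OF w]]) (rule w_nonneg[OF w])
  then show ?thesis using that W order_trans by blast
qed

lemma term_bounds:
  assumes w: "is_2D_weight w" and W: "\<And>k. (\<Sum>j. w j k) \<le> W"
  shows "w k k \<le> W" "(\<Sum>j. (1 - ind \<sigma> j) * w j k) \<le> W" "0 \<le> (\<Sum>j. (1 - ind \<sigma> j) * w j k)"
proof -
  have "w k k = sum (\<lambda>j. w j k) {k}" by simp
  also have "\<dots> \<le> (\<Sum>j. w j k)" by (rule sum_le_suminf[OF w_summ[OF w]]) (auto simp: w_nonneg[OF w])
  finally show "w k k \<le> W" using W[of k] by simp
  have "(\<Sum>j. (1 - ind \<sigma> j) * w j k) \<le> (\<Sum>j. w j k)"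
    by (rule suminf_le[OF _ w_col_summ[OF w] w_summ[OF w]]) (auto simp: ind_def w_nonneg[OF w])
  then show "(\<Sum>j. (1 - ind \<sigma> j) * w j k) \<le> W" using W[of k] by simp
  show "0 \<le> (\<Sum>j. (1 - ind \<sigma> j) * w j k)"
    by (rule suminf_nonneg[OF w_col_summ[OF w]]) (auto simp: ind_def w_nonneg[OF w])
qed

lemma spectral_bound:
  assumes w: "is_2D_weight w" and W: "\<And>k. (\<Sum>j. w j k) \<le> W" and s: "\<sigma> \<in> Gam"
  shows "0 \<le> spectral w \<sigma>" "spectral w \<sigma> \<le> 2 * W * lam \<sigma>"
proof -
  have f: "finite \<sigma>" using s by (simp add: Gam_def)
  note tb = term_bounds[OF w W]
  show "0 \<le> spectral w \<sigma>" unfolding spectral_eq[OF w s]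
    by (intro sum_nonneg add_nonneg_nonneg w_nonneg[OF w] tb(3))
  have "spectral w \<sigma> \<le> (\<Sum>k\<in>\<sigma>. 2 * W)" unfolding spectral_eq[OF w s]
    by (intro sum_mono) (metis tb(1) tb(2) add_mono mult_2)
  also have "\<dots> = 2 * W * real (card \<sigma>)" by simp
  also have "\<dots> \<le> 2 * W * lam \<sigma>"
  proof -
    have "W \<ge> 0" using W[of 0] suminf_nonneg[OF w_summ[OF w], of 0] w_nonneg[OF w] by (meson order_trans)
    then show ?thesis using card_le_lam[OF f] by (intro mult_left_mono) auto
  qed
  finally show "spectral w \<sigma> \<le> 2 * W * lam \<sigma>" .
qed

lemma GWN2_props:
  assumes w: "is_2D_weight w" and \<Phi>: "\<Phi> \<in> Sdual"
  shows "GWN2 w \<Phi> \<in> Sdual"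
    and "\<And>\<sigma>. \<sigma> \<in> Gam \<Longrightarrow> fock (GWN2 w \<Phi>) \<sigma> = complex_of_real (spectral w \<sigma>) * fock \<Phi> \<sigma>"
proof -
  obtain C r where C0: "C \<ge> 0" and C: "\<And>\<sigma>. \<sigma> \<in> Gam \<Longrightarrow> cmod (fock \<Phi> \<sigma>) \<le> C * lam \<sigma> ^ r"
    using fock_bound[OF \<Phi>] by blast
  obtain W where W0: "W \<ge> 0" and W: "\<And>k. (\<Sum>j. w j k) \<le> W" using weight_bound[OF w] by blast
  define g where "g = (\<lambda>\<sigma>. complex_of_real (spectral w \<sigma>) * fock \<Phi> \<sigma>)"
  have gb: "cmod (g \<sigma>) \<le> (2 * W * C) * lam \<sigma> ^ Suc r" if s: "\<sigma> \<in> Gam" for \<sigma>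
  proof -
    note sb = spectral_bound[OF w W s]
    have "cmod (g \<sigma>) = spectral w \<sigma> * cmod (fock \<Phi> \<sigma>)" unfolding g_def norm_mult using sb(1) by simp
    also have "\<dots> \<le> (2 * W * lam \<sigma>) * (C * lam \<sigma> ^ r)"
      using sb C[OF s] by (intro mult_mono) auto
    finally show ?thesis by (simp add: mult_ac)
  qed
  have e: "GWN2 w \<Phi> = mk g" unfolding GWN2_def using THE_mk[OF gb] by (simp add: g_def)
  show "GWN2 w \<Phi> \<in> Sdual" unfolding e by (rule mk_Sdual(1)[OF gb])
  show "\<And>\<sigma>. \<sigma> \<in> Gam \<Longrightarrow> fock (GWN2 w \<Phi>) \<sigma> = complex_of_real (spectral w \<sigma>) * fock \<Phi> \<sigma>"
    unfolding e using mk_Sdual(2)[OF gb] by (simp add: g_def)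
qed

definition sn :: "(nat \<Rightarrow> nat \<Rightarrow> real) \<Rightarrow> nat \<Rightarrow> nat set \<Rightarrow> real" where
  "sn w n \<sigma> = (\<Sum>j\<le>n. \<Sum>k\<le>n. w j k * ee j k \<sigma>)"

lemma sn_eq:
  assumes f: "finite \<sigma>"
  shows "sn w n \<sigma> = (\<Sum>k\<in>\<sigma> \<inter> {..n}. w k k + (\<Sum>j\<le>n. (1 - ind \<sigma> j) * w j k))"
proof -
  have inner: "(\<Sum>j\<le>n. w j k * ee j k \<sigma>) = (if k \<in> \<sigma> then w k k + (\<Sum>j\<le>n. (1 - ind \<sigma> j) * w j k) else 0)"
    if k: "k \<le> n" for k
  proof (cases "k \<in> \<sigma>")
    case True
    have "(\<Sum>j\<le>n. w j k * ee j k \<sigma>) = (\<Sum>j\<le>n. (1 - ind \<sigma> j) * w j k + (if j = k then w k k else 0))"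
      using True by (intro sum.cong refl) (auto simp: ee_def ind_def)
    also have "\<dots> = (\<Sum>j\<le>n. (1 - ind \<sigma> j) * w j k) + w k k"
      using k by (simp add: sum.distrib)
    finally show ?thesis using True by simp
  qed (simp add: ee_def ind_def)
  have "sn w n \<sigma> = (\<Sum>k\<le>n. \<Sum>j\<le>n. w j k * ee j k \<sigma>)" unfolding sn_def by (rule sum.swap)
  also have "\<dots> = (\<Sum>k\<le>n. if k \<in> \<sigma> then w k k + (\<Sum>j\<le>n. (1 - ind \<sigma> j) * w j k) else 0)"
    by (intro sum.cong refl) (simp add: inner)
  also have "\<dots> = (\<Sum>k\<in>{..n} \<inter> \<sigma>. w k k + (\<Sum>j\<le>n. (1 - ind \<sigma> j) * w j k))"
    by (simp add: sum.inter_restrict)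
  finally show ?thesis by (simp add: Int_commute)
qed

lemma sn_bounds:
  assumes w: "is_2D_weight w" and s: "\<sigma> \<in> Gam"
  shows "0 \<le> sn w n \<sigma>" "sn w n \<sigma> \<le> spectral w \<sigma>"
proof -
  have f: "finite \<sigma>" using s by (simp add: Gam_def)
  have nn: "0 \<le> (\<Sum>j\<le>n. (1 - ind \<sigma> j) * w j k)" for k
    by (intro sum_nonneg) (auto simp: ind_def w_nonneg[OF w])
  show "0 \<le> sn w n \<sigma>" unfolding sn_eq[OF f]
    by (intro sum_nonneg add_nonneg_nonneg w_nonneg[OF w] nn)
  have "sn w n \<sigma> \<le> (\<Sum>k\<in>\<sigma>. w k k + (\<Sum>j\<le>n. (1 - ind \<sigma> j) * w j k))"
    unfolding sn_eq[OF f] using f by (intro sum_mono2) (auto intro!: add_nonneg_nonneg w_nonneg[OF w] nn)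
  also have "\<dots> \<le> (\<Sum>k\<in>\<sigma>. w k k + (\<Sum>j. (1 - ind \<sigma> j) * w j k))"
    by (intro sum_mono add_left_mono sum_le_suminf w_col_summ[OF w]) (auto simp: ind_def w_nonneg[OF w])
  finally show "sn w n \<sigma> \<le> spectral w \<sigma>" unfolding spectral_eq[OF w s] .
qed

lemma sn_lim:
  assumes w: "is_2D_weight w" and s: "\<sigma> \<in> Gam"
  shows "(\<lambda>n. sn w n \<sigma>) \<longlonglongrightarrow> spectral w \<sigma>"
proof -
  have f: "finite \<sigma>" using s by (simp add: Gam_def)
  obtain N where N: "\<sigma> \<subseteq> {..<N}" using f finite_nat_bounded by blast
  have ev: "\<forall>\<^sub>F n in sequentially. (\<Sum>k\<in>\<sigma>. w k k + (\<Sum>j\<le>n. (1 - ind \<sigma> j) * w j k)) = sn w n \<sigma>"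
    using eventually_ge_at_top[of N]
  proof eventually_elim
    case (elim n)
    then have "\<sigma> \<inter> {..n} = \<sigma>" using N by auto
    then show ?case unfolding sn_eq[OF f] by simp
  qed
  have "(\<lambda>n. \<Sum>k\<in>\<sigma>. w k k + (\<Sum>j\<le>n. (1 - ind \<sigma> j) * w j k)) \<longlonglongrightarrow> (\<Sum>k\<in>\<sigma>. w k k + (\<Sum>j. (1 - ind \<sigma> j) * w j k))"
    by (intro tendsto_sum tendsto_add tendsto_const summable_LIMSEQ' w_col_summ[OF w])
  then have "(\<lambda>n. sn w n \<sigma>) \<longlonglongrightarrow> (\<Sum>k\<in>\<sigma>. w k k + (\<Sum>j. (1 - ind \<sigma> j) * w j k))"
    using ev by (rule Lim_transform_eventually)
  then show ?thesis unfolding spectral_eq[OF w s] .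
qed



lemma infsum_dom_null:
  fixes f :: "nat \<Rightarrow> 'a \<Rightarrow> real"
  assumes h: "h summable_on A"
    and b: "\<And>n x. x \<in> A \<Longrightarrow> 0 \<le> f n x \<and> f n x \<le> h x"
    and l: "\<And>x. x \<in> A \<Longrightarrow> (\<lambda>n. f n x) \<longlonglongrightarrow> 0"
  shows "(\<lambda>n. infsum (f n) A) \<longlonglongrightarrow> 0"
proof (rule LIMSEQ_I)
  fix r :: real assume r: "0 < r"
  have hs: "(h has_sum infsum h A) A" using h by simp
  obtain F where F: "finite F" "F \<subseteq> A" and d: "dist (sum h F) (infsum h A) \<le> r / 4"
    using has_sum_finite_approximation[OF hs, of "r/4"] r by auto
  have tail: "infsum h (A - F) \<le> r / 4"
  proof -
    have "infsum h (A - F) = infsum h A - sum h F"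
      using infsum_Diff[OF h _ F(2)] F(1) by simp
    then show ?thesis using d abs_ge_minus_self[of "sum h F - infsum h A"] unfolding dist_real_def by linarith
  qed
  have "(\<lambda>n. sum (f n) F) \<longlonglongrightarrow> 0"
    by (rule tendsto_null_sum) (use l F in auto)
  then have "\<exists>no. \<forall>n\<ge>no. norm (sum (f n) F - 0) < r / 2"
    by (rule LIMSEQ_D) (use r in simp)
  then obtain no where no: "\<And>n. n \<ge> no \<Longrightarrow> norm (sum (f n) F - 0) < r / 2" by blast
  show "\<exists>no. \<forall>n\<ge>no. norm (infsum (f n) A - 0) < r"
  proof (intro exI allI impI)
    fix n assume n: "n \<ge> no"
    have fs: "f n summable_on A"
      by (rule summable_on_comparison_test[OF h]) (use b in auto)
    have fsD: "f n summable_on (A - F)" by (rule summable_on_subset_banach[OF fs]) auto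
    have hsD: "h summable_on (A - F)" by (rule summable_on_subset_banach[OF h]) auto
    have "infsum (f n) A = sum (f n) F + infsum (f n) (A - F)"
      using infsum_Diff[OF fs _ F(2)] F(1) by simp
    moreover have "0 \<le> infsum (f n) (A - F)" by (rule infsum_nonneg) (use b in auto)
    moreover have "infsum (f n) (A - F) \<le> infsum h (A - F)"
      by (rule infsum_mono[OF fsD hsD]) (use b in auto)
    moreover have "0 \<le> sum (f n) F" by (rule sum_nonneg) (use b F in auto)
    moreover have "sum (f n) F < r / 2" using no[OF n] by simp
    ultimately show "norm (infsum (f n) A - 0) < r" using tail by simp
  qed
qed

theorem theorem3p6:
  fixes w :: "nat \<Rightarrow> nat \<Rightarrow> real"
    and \<Phi> :: "(nat set \<Rightarrow> complex) \<Rightarrow> complex"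
  assumes "is_2D_weight w"
    and "\<Phi> \<in> Sdual"
  shows "strong_conv
           (\<lambda>n. \<lambda>x. \<Sum>j\<le>n. \<Sum>k\<le>n. complex_of_real (w j k) * cre k (ann j (cre j (ann k \<Phi>))) x)
           (GWN2 w \<Phi>)"
proof -
  note w = assms(1) and \<Phi> = assms(2)
  obtain C r where C0: "C \<ge> 0" and C: "\<And>\<sigma>. \<sigma> \<in> Gam \<Longrightarrow> cmod (fock \<Phi> \<sigma>) \<le> C * lam \<sigma> ^ r"
    using fock_bound[OF \<Phi>] by blast
  obtain W where W0: "W \<ge> 0" and W: "\<And>k. (\<Sum>j. w j k) \<le> W" using weight_bound[OF w] by blast
  define q where "q = r + 3"
  define dd where "dd n \<sigma> = (spectral w \<sigma> - sn w n \<sigma>) / lam \<sigma> ^ 3" for n \<sigma>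
  define D where "D n = infsum (dd n) Gam" for n
  define F where "F = (\<lambda>n. \<lambda>x. \<Sum>j\<le>n. \<Sum>k\<le>n. complex_of_real (w j k) * cre k (ann j (cre j (ann k \<Phi>))) x)"
  define c where "c = fock \<Phi>"
  have dd_b: "0 \<le> dd n \<sigma> \<and> dd n \<sigma> \<le> 2 * W * (1 / lam \<sigma> ^ 2)" if s: "\<sigma> \<in> Gam" for n \<sigma>
  proof -
    note sb = sn_bounds[OF w s, of n] and sp = spectral_bound[OF w W s]
    have l: "lam \<sigma> > 0" by (rule lam_pos)
    have "dd n \<sigma> \<le> spectral w \<sigma> / lam \<sigma> ^ 3"
      unfolding dd_def using sb l by (intro divide_right_mono) auto
    also have "\<dots> \<le> 2 * W * lam \<sigma> / lam \<sigma> ^ 3" using sp l by (intro divide_right_mono) auto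
    also have "\<dots> = 2 * W * (1 / lam \<sigma> ^ 2)" using l by (simp add: power_eq_if)
    finally show ?thesis unfolding dd_def using sb l by simp
  qed
  have dd_summ: "dd n summable_on Gam" for n
    by (rule summable_on_comparison_test[OF summable_on_cmult_right[OF lam_summable, of "2 * W"]])
       (use dd_b in auto)
  have Dlim: "D \<longlonglongrightarrow> 0"
    unfolding D_def
  proof (rule infsum_dom_null[OF summable_on_cmult_right[OF lam_summable, of "2 * W"]])
    show "\<And>n x. x \<in> Gam \<Longrightarrow> 0 \<le> dd n x \<and> dd n x \<le> 2 * W * (1 / lam x ^ 2)" by (rule dd_b)
    fix \<sigma> assume s: "\<sigma> \<in> Gam"
    have "(\<lambda>n. (spectral w \<sigma> - sn w n \<sigma>) / lam \<sigma> ^ 3) \<longlonglongrightarrow> (spectral w \<sigma> - spectral w \<sigma>) / lam \<sigma> ^ 3"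
      using lam_pos[of \<sigma>] by (intro tendsto_intros sn_lim[OF w s]) auto
    then show "(\<lambda>n. dd n \<sigma>) \<longlonglongrightarrow> 0" unfolding dd_def using lam_pos[of \<sigma>] by simp
  qed
  have D0: "D n \<ge> 0" for n unfolding D_def by (rule infsum_nonneg) (use dd_b in auto)
  have key: "cmod (F n x - GWN2 w \<Phi> x) \<le> C * pnorm (real q) x * D n" if x: "x \<in> Sspace" for n x
  proof -
    have T: "((\<lambda>\<sigma>. x \<sigma> * (complex_of_real (ee j k \<sigma>) * c \<sigma>)) has_sum cre k (ann j (cre j (ann k \<Phi>))) x) Gam" for j k
      using dual_rep[OF T_props(1)[OF \<Phi>, of k j] x]
      by (rule has_sum_cong[THEN iffD1, rotated]) (simp add: T_props(2)[OF \<Phi>] c_def)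
    have "((\<lambda>\<sigma>. \<Sum>j\<le>n. \<Sum>k\<le>n. complex_of_real (w j k) * (x \<sigma> * (complex_of_real (ee j k \<sigma>) * c \<sigma>))) has_sum F n x) Gam"
      unfolding F_def
      by (intro has_sum_sum_fin has_sum_cmult_right T) auto
    moreover have "(\<Sum>j\<le>n. \<Sum>k\<le>n. complex_of_real (w j k) * (x \<sigma> * (complex_of_real (ee j k \<sigma>) * c \<sigma>)))
        = x \<sigma> * (complex_of_real (sn w n \<sigma>) * c \<sigma>)" for \<sigma>
      unfolding sn_def of_real_sum sum_distrib_left sum_distrib_right by (simp add: mult_ac)
    ultimately have hF: "((\<lambda>\<sigma>. x \<sigma> * (complex_of_real (sn w n \<sigma>) * c \<sigma>)) has_sum F n x) Gam" by simp
    have hG: "((\<lambda>\<sigma>. x \<sigma> * (complex_of_real (spectral w \<sigma>) * c \<sigma>)) has_sum GWN2 w \<Phi> x) Gam"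
      using dual_rep[OF GWN2_props(1)[OF w \<Phi>] x]
      by (rule has_sum_cong[THEN iffD1, rotated]) (simp add: GWN2_props(2)[OF w \<Phi>] c_def)
    have hD: "((\<lambda>\<sigma>. x \<sigma> * (complex_of_real (sn w n \<sigma>) * c \<sigma>) + (-1) * (x \<sigma> * (complex_of_real (spectral w \<sigma>) * c \<sigma>)))
        has_sum (F n x + (-1) * GWN2 w \<Phi> x)) Gam"
      by (intro has_sum_add hF has_sum_cmult_right hG)
    have hB: "(((\<lambda>\<sigma>. C * pnorm (real q) x * dd n \<sigma>)) has_sum (C * pnorm (real q) x * D n)) Gam"
      unfolding D_def by (intro has_sum_cmult_right has_sum_infsum dd_summ)
    have "norm (F n x + (-1) * GWN2 w \<Phi> x) \<le> C * pnorm (real q) x * D n"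
    proof (rule norm_infsum_le[OF hD hB])
      fix \<sigma> assume s: "\<sigma> \<in> Gam"
      note sb = sn_bounds[OF w s, of n]
      have l: "lam \<sigma> > 0" by (rule lam_pos)
      have e: "x \<sigma> * (complex_of_real (sn w n \<sigma>) * c \<sigma>) + (-1) * (x \<sigma> * (complex_of_real (spectral w \<sigma>) * c \<sigma>))
          = - (x \<sigma> * complex_of_real (spectral w \<sigma> - sn w n \<sigma>) * c \<sigma>)"
        by (simp add: algebra_simps)
      have "norm (x \<sigma> * complex_of_real (spectral w \<sigma> - sn w n \<sigma>) * c \<sigma>)
          = cmod (x \<sigma>) * (spectral w \<sigma> - sn w n \<sigma>) * cmod (c \<sigma>)"
      proof -
        have "cmod (complex_of_real (spectral w \<sigma> - sn w n \<sigma>)) = spectral w \<sigma> - sn w n \<sigma>"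
          unfolding norm_of_real using sb by simp
        then show ?thesis by (simp only: norm_mult)
      qed
      also have "\<dots> \<le> (pnorm (real q) x / lam \<sigma> ^ q) * (spectral w \<sigma> - sn w n \<sigma>) * (C * lam \<sigma> ^ r)"
      proof (intro mult_mono)
        show "cmod (x \<sigma>) \<le> pnorm (real q) x / lam \<sigma> ^ q"
          using coef_bound[OF x s, of q] l by (simp add: field_simps)
        show "cmod (c \<sigma>) \<le> C * lam \<sigma> ^ r" unfolding c_def by (rule C[OF s])
      qed (use sb pnorm_nonneg l in auto)
      also have "\<dots> = C * pnorm (real q) x * dd n \<sigma>"
        unfolding dd_def q_def using l by (simp add: field_simps power_add)
      finally show "norm (x \<sigma> * (complex_of_real (sn w n \<sigma>) * c \<sigma>) + (-1) * (x \<sigma> * (complex_of_real (spectral w \<sigma>) * c \<sigma>)))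
          \<le> C * pnorm (real q) x * dd n \<sigma>"
        unfolding e norm_minus_cancel .
    qed
    then show ?thesis by simp
  qed
  show ?thesis
    unfolding strong_conv_def F_def[symmetric]
  proof (intro allI impI)
    fix B :: "(nat set \<Rightarrow> complex) set" and \<epsilon> :: real
    assume Bb: "S_bounded B" and e: "\<epsilon> > 0"
    have BS: "B \<subseteq> Sspace" using Bb unfolding S_bounded_def by blast
    obtain Cq where Cq: "\<And>x. x \<in> B \<Longrightarrow> pnorm (real q) x \<le> Cq"
      using Bb unfolding S_bounded_def by (meson of_nat_0_le_iff)
    define K where "K = C * max Cq 0 + 1"
    have CK: "C * max Cq 0 \<ge> 0" using C0 by simp
    then have K: "K > 0" unfolding K_def by linarith
    have "eventually (\<lambda>n. D n < \<epsilon> / K) sequentially"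
      using Dlim e K by (intro order_tendstoD(2)) auto
    then show "eventually (\<lambda>n. \<forall>x\<in>B. cmod (F n x - GWN2 w \<Phi> x) < \<epsilon>) sequentially"
    proof eventually_elim
      case (elim n)
      show ?case
      proof
        fix x assume xB: "x \<in> B"
        have x: "x \<in> Sspace" using BS xB by blast
        have "cmod (F n x - GWN2 w \<Phi> x) \<le> C * pnorm (real q) x * D n" by (rule key[OF x])
        also have "\<dots> \<le> C * max Cq 0 * D n"
          using Cq[OF xB] C0 D0[of n] by (intro mult_right_mono mult_left_mono) auto
        also have "\<dots> \<le> K * D n" using D0[of n] unfolding K_def by (intro mult_right_mono) auto
        also have "\<dots> < K * (\<epsilon> / K)" using elim K by (intro mult_strict_left_mono) auto
        also have "\<dots> = \<epsilon>" using K by simp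
        finally show "cmod (F n x - GWN2 w \<Phi> x) < \<epsilon>" .
      qed
    qed
  qed
qed


end
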